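(* Let $X$ be a finite set of even cardinality, $s:\mathfrak S_X\otimes_{\min}\mathfrak S_X\to\mathbb C$ a state, and $\tilde s=s\circ(q_C\otimes q_C)$, regarded as a state of $\mathcal S_{X,\mathbb Z_2}\otimes_{\rm c}\mathcal S_{X,\mathbb Z_2}$. Suppose the correlation $p_{\tilde s}(a,b|x,y)=\tilde s(e_{x,a}\otimes f_{y,b})$ is synchronous, i.e. $p_{\tilde s}(a,b|x,x)=0$ whenever $a\ne b$. Then $\tilde s$ is an abstract self-test for $\mathcal S_C$: there is exactly one state in $\mathcal S_C$ whose restriction to $\mathcal S_{X,\mathbb Z_2}\otimes\mathcal S_{X,\mathbb Z_2}$ equals $\tilde s$.
   Context: $\mathcal A_{X,\mathbb Z_2}$ is the universal unital C*-algebra generated by projections $e_{x,a}$ ($x\in X$, $a\in\mathbb Z_2$) with $e_{x,0}+e_{x,1}=1$; $\mathcal S_{X,\mathbb Z_2}=\mathrm{span}\{e_{x,a}\}$; in the second tensor factor the generators are written $f_{y,b}$. The Clifford algebra $\mathfrak C_X$ is the universal unital C*-algebra generated by self-adjoint unitaries $u_x$, $x\in X$, with $u_xu_y+u_yu_x=0$ for $x\ne y$. $q_C:\mathcal A_{X,\mathbb Z_2}\to\mathfrak C_X$ is the surjective *-homomorphism with $q_C(e_{x,0})=(1+u_x)/2$, $q_C(e_{x,1})=(1-u_x)/2$ (its kernel is the ideal generated by $e_{x,0}e_{y,0}+e_{y,0}e_{x,0}-e_{x,0}-e_{y,0}+\frac12$, $x\ne y$). $\mathfrak S_X=q_C(\mathcal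 S_{X,\mathbb Z_2})=\mathrm{span}\{1,u_x:x\in X\}\subseteq\mathfrak C_X$. $\mathcal S_C$ is the set of states of $\mathcal A_{X,\mathbb Z_2}\otimes_{\min}\mathcal A_{X,\mathbb Z_2}$ that factor through $q_C\otimes q_C:\mathcal A_{X,\mathbb Z_2}\otimes_{\min}\mathcal A_{X,\mathbb Z_2}\to\mathfrak C_X\otimes_{\min}\mathfrak C_X$. *)

theory Defs
  imports Complex_Main
begin

text \<open>Concrete model of the Clifford algebra C_X (X finite, linearly ordered so that
  ordered monomials u_S = product of u_x, x in S increasing, form a basis) and of
  C_X (x)_min C_X, which is finite dimensional, so the minimal tensor product is the
  algebraic one.  An element of C_X (x) C_X is given by its coefficient function on the
  basis u_S (x) u_T, S, T subsets of X.\<close>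

type_synonym 'x clt = "'x set \<times> 'x set \<Rightarrow> complex"

definition sdiff :: "'a set \<Rightarrow> 'a set \<Rightarrow> 'a set" where
  "sdiff A B = (A - B) \<union> (B - A)"

text \<open>u_S u_T = cl_sgn S T * u_(S symdiff T)\<close>
definition cl_sgn :: "'x::linorder set \<Rightarrow> 'x set \<Rightarrow> complex" where
  "cl_sgn S T = (-1) ^ card {(i, j). i \<in> S \<and> j \<in> T \<and> j < i}"

definition clt_mult :: "'x::linorder set \<Rightarrow> 'x clt \<Rightarrow> 'x clt \<Rightarrow> 'x clt" where
  "clt_mult X a b = (\<lambda>(S, T). \<Sum>(S1, T1) \<in> Pow X \<times> Pow X.
      a (S1, T1) * b (sdiff S1 S, sdiff T1 T) * cl_sgn S1 (sdiff S1 S) * cl_sgn T1 (sdiff T1 T))"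

text \<open>(u_S (x) u_T)^* = u_S^* (x) u_T^*, and u_S^* = u_S^(-1) = cl_sgn S S * u_S\<close>
definition clt_star :: "'x::linorder clt \<Rightarrow> 'x clt" where
  "clt_star a = (\<lambda>(S, T). cnj (a (S, T)) * cl_sgn S S * cl_sgn T T)"

definition lin_eval :: "'x set \<Rightarrow> 'x clt \<Rightarrow> 'x clt \<Rightarrow> complex" where
  "lin_eval X w a = (\<Sum>(S, T) \<in> Pow X \<times> Pow X. w (S, T) * a (S, T))"

definition cpos :: "complex \<Rightarrow> bool" where
  "cpos z \<longleftrightarrow> Im z = 0 \<and> 0 \<le> Re z"

text \<open>States of C_X (x)_min C_X (canonical representative: zero off Pow X x Pow X).\<close>
definition is_state_CC :: "'x::linorder set \<Rightarrow> 'x clt \<Rightarrow> bool" where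
  "is_state_CC X w \<longleftrightarrow>
     (\<forall>S T. \<not> (S \<subseteq> X \<and> T \<subseteq> X) \<longrightarrow> w (S, T) = 0) \<and>
     w ({}, {}) = 1 \<and>
     (\<forall>a. cpos (lin_eval X w (clt_mult X (clt_star a) a)))"

text \<open>Membership in the operator subsystem S_X (x) S_X = span of (1 or u_x) (x) (1 or u_y).\<close>
definition in_SS :: "'x set \<Rightarrow> 'x clt \<Rightarrow> bool" where
  "in_SS X c \<longleftrightarrow> (\<forall>S \<in> Pow X. \<forall>T \<in> Pow X. c (S, T) \<noteq> 0 \<longrightarrow> card S \<le> 1 \<and> card T \<le> 1)"

text \<open>States of the operator system S_X (x)_min S_X: unital functionals that are
  nonnegative on the positive elements, i.e. the elements a^* a of C_X (x) C_X lying in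
  the subsystem (min tensor product is injective).  Only the values of s on the basis
  elements (S,T) with card S, card T at most 1 matter.\<close>
definition is_state_SS :: "'x::linorder set \<Rightarrow> 'x clt \<Rightarrow> bool" where
  "is_state_SS X s \<longleftrightarrow>
     s ({}, {}) = 1 \<and>
     (\<forall>a. in_SS X (clt_mult X (clt_star a) a) \<longrightarrow>
          cpos (lin_eval X s (clt_mult X (clt_star a) a)))"

text \<open>q_C(e_(x,a)) = (1 + (-1)^a u_x)/2, with a :: bool (False = 0, True = 1 in Z_2).\<close>
definition qe :: "'x \<Rightarrow> bool \<Rightarrow> 'x set \<Rightarrow> complex" where
  "qe x a = (\<lambda>S. if S = {} then 1/2 else if S = {x} then (if a then - 1/2 else 1/2) else 0)"

definition tens :: "('x set \<Rightarrow> complex) \<Rightarrow> ('x set \<Rightarrow> complex) \<Rightarrow> 'x clt" where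
  "tens f g = (\<lambda>(S, T). f S * g T)"

text \<open>p_{s~}(a,b|x,y) = s~(e_(x,a) (x) f_(y,b)) = s(q_C(e_(x,a)) (x) q_C(e_(y,b)))\<close>
definition corr :: "'x set \<Rightarrow> 'x clt \<Rightarrow> bool \<Rightarrow> bool \<Rightarrow> 'x \<Rightarrow> 'x \<Rightarrow> complex" where
  "corr X s a b x y = lin_eval X s (tens (qe x a) (qe y b))"

end

theory Submission
  imports Defs
begin



lemma sdiff_commute: "sdiff A B = sdiff B A" by (auto simp: sdiff_def)
lemma sdiff_cancel[simp]: "sdiff A (sdiff A U) = U" by (auto simp: sdiff_def)
lemma sdiff_empty[simp]: "sdiff {} A = A" "sdiff A {} = A" "sdiff A A = {}" by (auto simp: sdiff_def)
lemma sdiff_sub: "A \<subseteq> X \<Longrightarrow> B \<subseteq> X \<Longrightarrow> sdiff A B \<subseteq> X" by (auto simp: sdiff_def)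
lemma sdiff_fin: "finite A \<Longrightarrow> finite B \<Longrightarrow> finite (sdiff A B)" by (auto simp: sdiff_def)

definition np :: "'x::linorder set \<Rightarrow> 'x set \<Rightarrow> nat" where
  "np S T = card {(i, j). i \<in> S \<and> j \<in> T \<and> j < i}"

lemma cl_sgn_np: "cl_sgn S T = (-1) ^ np S T" by (simp add: cl_sgn_def np_def)

lemma np_fin: "finite S \<Longrightarrow> finite T \<Longrightarrow> finite {(i, j). i \<in> S \<and> j \<in> T \<and> j < i}"
  by (rule finite_subset[of _ "S \<times> T"]) auto

lemma np_un_left: "finite A1 \<Longrightarrow> finite A2 \<Longrightarrow> finite T \<Longrightarrow> A1 \<inter> A2 = {} \<Longrightarrow>
   np (A1 \<union> A2) T = np A1 T + np A2 T"
proof -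
  assume f: "finite A1" "finite A2" "finite T" and d: "A1 \<inter> A2 = {}"
  have e: "{(i, j). i \<in> A1 \<union> A2 \<and> j \<in> T \<and> j < i} = {(i, j). i \<in> A1 \<and> j \<in> T \<and> j < i} \<union> {(i, j). i \<in> A2 \<and> j \<in> T \<and> j < i}"
    by auto
  show ?thesis unfolding np_def e
    by (rule card_Un_disjoint) (use f d np_fin in auto)
qed

lemma np_un_right: "finite A1 \<Longrightarrow> finite A2 \<Longrightarrow> finite T \<Longrightarrow> A1 \<inter> A2 = {} \<Longrightarrow>
   np T (A1 \<union> A2) = np T A1 + np T A2"
proof -
  assume f: "finite A1" "finite A2" "finite T" and d: "A1 \<inter> A2 = {}"
  have e: "{(i, j). i \<in> T \<and> j \<in> A1 \<union> A2 \<and> j < i} = {(i, j). i \<in> T \<and> j \<in> A1 \<and> j < i} \<union> {(i, j). i \<in> T \<and> j \<in> A2 \<and> j < i}"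
    by auto
  show ?thesis unfolding np_def e
    by (rule card_Un_disjoint) (use f d np_fin in auto)
qed

lemma m1_sq: "((-1::complex) ^ n) * (-1) ^ n = 1"
  by (simp flip: power_add)

lemma cl_sgn_sq[simp]: "cl_sgn A B * cl_sgn A B = 1"
  by (simp add: cl_sgn_np m1_sq)

lemma cl_sgn_cnj[simp]: "cnj (cl_sgn A B) = cl_sgn A B"
  by (simp add: cl_sgn_np)

lemma cl_sgn_sdiff_left:
  assumes "finite A" "finite B" "finite C"
  shows "cl_sgn (sdiff A B) C = cl_sgn A C * cl_sgn B C"
proof -
  have 1: "np A C = np (A - B) C + np (A \<inter> B) C"
  proof -
    have "np ((A - B) \<union> (A \<inter> B)) C = np (A - B) C + np (A \<inter> B) C"
      by (rule np_un_left) (use assms in auto)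
    thus ?thesis by (simp add: Un_Diff_Int)
  qed
  have 2: "np B C = np (B - A) C + np (A \<inter> B) C"
  proof -
    have "np ((B - A) \<union> (A \<inter> B)) C = np (B - A) C + np (A \<inter> B) C"
      by (rule np_un_left) (use assms in auto)
    moreover have "(B - A) \<union> (A \<inter> B) = B" by auto
    ultimately show ?thesis by simp
  qed
  have 3: "np (sdiff A B) C = np (A - B) C + np (B - A) C"
    using np_un_left[of "A - B" "B - A" C] assms unfolding sdiff_def by auto
  show ?thesis unfolding cl_sgn_np 1 2 3 power_add
    by (simp add: algebra_simps m1_sq)
qed

lemma cl_sgn_sdiff_right:
  assumes "finite A" "finite B" "finite C"
  shows "cl_sgn C (sdiff A B) = cl_sgn C A * cl_sgn C B"
proof -
  have 1: "np C A = np C (A - B) + np C (A \<inter> B)"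
  proof -
    have "np C ((A - B) \<union> (A \<inter> B)) = np C (A - B) + np C (A \<inter> B)"
      by (rule np_un_right) (use assms in auto)
    thus ?thesis by (simp add: Un_Diff_Int)
  qed
  have 2: "np C B = np C (B - A) + np C (A \<inter> B)"
  proof -
    have "np C ((B - A) \<union> (A \<inter> B)) = np C (B - A) + np C (A \<inter> B)"
      by (rule np_un_right) (use assms in auto)
    moreover have "(B - A) \<union> (A \<inter> B) = B" by auto
    ultimately show ?thesis by simp
  qed
  have 3: "np C (sdiff A B) = np C (A - B) + np C (B - A)"
    using np_un_right[of "A - B" "B - A" C] assms unfolding sdiff_def by auto
  show ?thesis unfolding cl_sgn_np 1 2 3 power_add
    by (simp add: algebra_simps m1_sq)
qed

lemma cl_sgn_empty[simp]: "cl_sgn {} A = 1" "cl_sgn A {} = 1"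
  by (simp_all add: cl_sgn_def)

lemma cl_sgn_self_le1: "finite A \<Longrightarrow> card A \<le> 1 \<Longrightarrow> cl_sgn A A = 1"
proof -
  assume "card A \<le> 1" "finite A"
  hence "\<forall>x\<in>A. \<forall>y\<in>A. x = y" using card_le_Suc0_iff_eq by auto
  hence "{(i, j). i \<in> A \<and> j \<in> A \<and> j < i} = {}" by auto
  thus ?thesis unfolding cl_sgn_def by (metis card.empty power_0)
qed

lemma cl_sgn_swap:
  assumes "finite S"
  shows "cl_sgn {y} S * cl_sgn S {y} = (-1) ^ card (S - {y})"
proof -
  have a: "{(i, j). i \<in> {y} \<and> j \<in> S \<and> j < i} = Pair y ` {j \<in> S. j < y}" by auto
  have b: "{(i, j). i \<in> S \<and> j \<in> {y} \<and> j < i} = (\<lambda>i. (i, y)) ` {i \<in> S. y < i}" by auto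
  have c: "card (S - {y}) = card {j \<in> S. j < y} + card {i \<in> S. y < i}"
  proof -
    have "S - {y} = {j \<in> S. j < y} \<union> {i \<in> S. y < i}" by auto
    moreover have "card ({j \<in> S. j < y} \<union> {i \<in> S. y < i}) = card {j \<in> S. j < y} + card {i \<in> S. y < i}"
      by (rule card_Un_disjoint) (use assms in auto)
    ultimately show ?thesis by simp
  qed
  have d: "card (Pair y ` {j \<in> S. j < y}) = card {j \<in> S. j < y}"
    by (rule card_image) (simp add: inj_on_def)
  have e: "card ((\<lambda>i. (i, y)) ` {i \<in> S. y < i}) = card {i \<in> S. y < i}"
    by (rule card_image) (simp add: inj_on_def)
  show ?thesis unfolding cl_sgn_def a b c power_add d e by simp
qed




definition ee :: "'x set \<Rightarrow> 'x set \<Rightarrow> 'x clt" where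
  "ee A B = (\<lambda>p. if p = (A, B) then 1 else 0)"

lemma mult_lin_left:
  "clt_mult X (\<lambda>p. x * f p + y * g p) b = (\<lambda>p. x * clt_mult X f b p + y * clt_mult X g b p)"
  unfolding clt_mult_def
  by (auto simp: fun_eq_iff split_def sum.distrib sum_distrib_left algebra_simps)

lemma mult_lin_right:
  "clt_mult X b (\<lambda>p. x * f p + y * g p) = (\<lambda>p. x * clt_mult X b f p + y * clt_mult X b g p)"
  unfolding clt_mult_def
  by (auto simp: fun_eq_iff split_def sum.distrib sum_distrib_left algebra_simps)

lemma mult_diff_left:
  "clt_mult X (\<lambda>p. f p - g p) b = (\<lambda>p. clt_mult X f b p - clt_mult X g b p)"
  using mult_lin_left[of X 1 f "-1" g b] by simp

lemma mult_diff_right: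
  "clt_mult X b (\<lambda>p. f p - g p) = (\<lambda>p. clt_mult X b f p - clt_mult X b g p)"
  using mult_lin_right[of X b 1 f "-1" g] by simp

lemma mult_scale_left:
  "clt_mult X (\<lambda>p. x * f p) b = (\<lambda>p. x * clt_mult X f b p)"
  using mult_lin_left[of X x f 0 f b] by simp

lemma mult_scale_right:
  "clt_mult X b (\<lambda>p. x * f p) = (\<lambda>p. x * clt_mult X b f p)"
  using mult_lin_right[of X b x f 0 f] by simp

lemma star_lin:
  "clt_star (\<lambda>p. x * f p + y * g p) = (\<lambda>p. cnj x * clt_star f p + cnj y * clt_star g p)"
  unfolding clt_star_def by (auto simp: fun_eq_iff algebra_simps)

lemma star_diff:
  "clt_star (\<lambda>p. f p - g p) = (\<lambda>p. clt_star f p - clt_star g p)"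
  using star_lin[of 1 f "-1" g] by simp

lemma star_scale:
  "clt_star (\<lambda>p. x * f p) = (\<lambda>p. cnj x * clt_star f p)"
  unfolding clt_star_def by (auto simp: fun_eq_iff algebra_simps)

lemma star_ee: "clt_star (ee A B) = (\<lambda>p. (cl_sgn A A * cl_sgn B B) * ee A B p)"
  unfolding clt_star_def ee_def by (auto simp: fun_eq_iff)

lemma lin_eval_lin:
  "lin_eval X w (\<lambda>p. x * f p + y * g p) = x * lin_eval X w f + y * lin_eval X w g"
  unfolding lin_eval_def
  by (auto simp: split_def sum.distrib sum_distrib_left algebra_simps)

lemma lin_eval_diff:
  "lin_eval X w (\<lambda>p. f p - g p) = lin_eval X w f - lin_eval X w g"
  using lin_eval_lin[of X w 1 f "-1" g] by simp

lemma lin_eval_add: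
  "lin_eval X w (\<lambda>p. f p + g p) = lin_eval X w f + lin_eval X w g"
  using lin_eval_lin[of X w 1 f 1 g] by simp

lemma lin_eval_scale:
  "lin_eval X w (\<lambda>p. x * f p) = x * lin_eval X w f"
  using lin_eval_lin[of X w x f 0 f] by simp

lemma lin_eval_ee:
  assumes "finite X" "A \<subseteq> X" "B \<subseteq> X"
  shows "lin_eval X w (ee A B) = w (A, B)"
proof -
  have "lin_eval X w (ee A B) = (\<Sum>p\<in>Pow X \<times> Pow X. if p = (A, B) then w p else 0)"
    unfolding lin_eval_def ee_def
    apply (intro sum.cong refl)
    subgoal for p by (cases p) simp
    done
  also have "\<dots> = w (A, B)" using assms by (simp add: sum.delta')
  finally show ?thesis .
qed

lemma mult_ee:
  assumes "A \<subseteq> X" "B \<subseteq> X" "finite X"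
  shows "clt_mult X (ee A B) (ee C D) = (\<lambda>p. (cl_sgn A C * cl_sgn B D) * ee (sdiff A C) (sdiff B D) p)"
proof (rule ext, clarify)
  fix S T
  have "clt_mult X (ee A B) (ee C D) (S, T) = (\<Sum>p\<in>Pow X \<times> Pow X. if p = (A, B) then
      ee C D (sdiff A S, sdiff B T) * cl_sgn A (sdiff A S) * cl_sgn B (sdiff B T) else 0)"
    unfolding clt_mult_def ee_def prod.case
    apply (intro sum.cong refl)
    subgoal for p by (cases p) simp
    done
  also have "\<dots> = ee C D (sdiff A S, sdiff B T) * cl_sgn A (sdiff A S) * cl_sgn B (sdiff B T)"
    using assms by (simp add: sum.delta')
  also have "\<dots> = (cl_sgn A C * cl_sgn B D) * ee (sdiff A C) (sdiff B D) (S, T)"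
  proof (cases "sdiff A S = C \<and> sdiff B T = D")
    case True
    then have "S = sdiff A C" "T = sdiff B D" by auto
    then show ?thesis using True by (simp add: ee_def)
  next
    case False
    then have "\<not> (S = sdiff A C \<and> T = sdiff B D)" by auto
    then show ?thesis using False by (auto simp add: ee_def)
  qed
  finally show "clt_mult X (ee A B) (ee C D) (S, T) = (cl_sgn A C * cl_sgn B D) * ee (sdiff A C) (sdiff B D) (S, T)" .
qed

lemma expand:
  fixes \<alpha> \<beta> :: real
  assumes "clt_star P = P"
  shows "clt_mult X (clt_star (\<lambda>p. of_real \<alpha> * P p + of_real \<beta> * c p)) (\<lambda>p. of_real \<alpha> * P p + of_real \<beta> * c p)
    = (\<lambda>p. of_real (\<alpha>*\<alpha>) * clt_mult X P P p + of_real (\<alpha>*\<beta>) * (clt_mult X P c p + clt_mult X (clt_star c) P p)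
         + of_real (\<beta>*\<beta>) * clt_mult X (clt_star c) c p)"
  unfolding star_lin assms mult_lin_left mult_lin_right
  by (auto simp: fun_eq_iff algebra_simps)

lemma cs_lemma:
  fixes w :: "'x::linorder clt"
  assumes pos: "\<And>\<alpha> \<beta>::real. cpos (lin_eval X w (clt_mult X (clt_star (\<lambda>p. of_real \<alpha> * P p + of_real \<beta> * c p)) (\<lambda>p. of_real \<alpha> * P p + of_real \<beta> * c p)))"
    and sP: "clt_star P = P" and PP: "lin_eval X w (clt_mult X P P) = 0"
  shows "lin_eval X w (clt_mult X P c) + lin_eval X w (clt_mult X (clt_star c) P) = 0"
proof -
  define K where "K = lin_eval X w (clt_mult X P c) + lin_eval X w (clt_mult X (clt_star c) P)"
  define L where "L = lin_eval X w (clt_mult X (clt_star c) c)"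
  have v: "cpos (of_real (\<alpha>*\<beta>) * K + of_real (\<beta>*\<beta>) * L)" for \<alpha> \<beta> :: real
    using pos[of \<alpha> \<beta>] unfolding expand[OF sP] lin_eval_add lin_eval_scale PP lin_eval_add K_def L_def
    by (simp add: algebra_simps)
  have im: "\<alpha> * Im K + Im L = 0" for \<alpha> using v[of \<alpha> 1] by (simp add: cpos_def)
  have imK: "Im K = 0" using im[of 0] im[of 1] by simp
  have re: "\<alpha> * Re K + Re L \<ge> 0" for \<alpha> using v[of \<alpha> 1] by (simp add: cpos_def)
  have reK: "Re K = 0"
  proof (rule ccontr)
    assume "Re K \<noteq> 0"
    then have "(- (Re L + 1) / Re K) * Re K + Re L = -1" by (simp add: field_simps)
    with re[of "- (Re L + 1) / Re K"] show False by simp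
  qed
  show ?thesis using imK reK unfolding K_def[symmetric] by (simp add: complex_eq_iff)
qed




definition PP :: "'x \<Rightarrow> 'x clt" where
  "PP y = (\<lambda>p. ee {} {} p - ee {y} {y} p)"

lemma cl_sgn_single[simp]: "cl_sgn {y} {y} = 1"
  by (rule cl_sgn_self_le1) auto

lemma star_PP: "clt_star (PP y) = PP y"
  unfolding PP_def star_diff star_ee by simp

lemma PP_PP: "finite X \<Longrightarrow> y \<in> X \<Longrightarrow> clt_mult X (PP y) (PP y) = (\<lambda>p. 2 * PP y p)"
  unfolding PP_def mult_diff_left mult_diff_right
  by (simp add: mult_ee fun_eq_iff)

lemma lin_eval_PP: "finite X \<Longrightarrow> y \<in> X \<Longrightarrow> lin_eval X w (PP y) = w ({}, {}) - w ({y}, {y})"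
  unfolding PP_def lin_eval_diff by (simp add: lin_eval_ee)

lemma PP_h:
  assumes "finite X" "y \<in> X" "A \<subseteq> X" "B \<subseteq> X"
  shows "clt_mult X (PP y) (ee A B) = (\<lambda>p. ee A B p - (cl_sgn {y} A * cl_sgn {y} B) * ee (sdiff {y} A) (sdiff {y} B) p)"
  unfolding PP_def mult_diff_left using assms
  by (subst mult_ee, auto)+

lemma h_PP:
  assumes "finite X" "y \<in> X" "A \<subseteq> X" "B \<subseteq> X"
  shows "clt_mult X (ee A B) (PP y) = (\<lambda>p. ee A B p - (cl_sgn A {y} * cl_sgn B {y}) * ee (sdiff {y} A) (sdiff {y} B) p)"
  unfolding PP_def mult_diff_right using assms
  by (subst mult_ee, auto)+ (simp add: sdiff_commute)

lemma SS_zero: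
  assumes fin: "finite X" and st: "is_state_SS X s" and y: "y \<in> X" and syy: "s ({y}, {y}) = 1"
    and AB: "A \<subseteq> X" "B \<subseteq> X" "card A \<le> 1" "card B \<le> 1"
    and anti: "cl_sgn {y} A * cl_sgn {y} B = - (cl_sgn A {y} * cl_sgn B {y})"
  shows "s (A, B) = 0"
proof -
  have fA: "finite A" "finite B" using AB fin finite_subset by auto
  have sh: "clt_star (ee A B) = ee A B"
    unfolding star_ee using fA AB by (simp add: cl_sgn_self_le1)
  have hh: "clt_mult X (ee A B) (ee A B) = ee {} {}"
    using AB fin fA by (simp add: mult_ee cl_sgn_self_le1)
  have Ph: "clt_mult X (PP y) (ee A B) p + clt_mult X (ee A B) (PP y) p = 2 * ee A B p" for p
    unfolding PP_h[OF fin y AB(1,2)] h_PP[OF fin y AB(1,2)]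
    using anti by (simp add: algebra_simps)
  have s00: "s ({}, {}) = 1" using st by (simp add: is_state_SS_def)
  have pos: "cpos (lin_eval X s (clt_mult X (clt_star (\<lambda>p. of_real \<alpha> * PP y p + of_real \<beta> * ee A B p)) (\<lambda>p. of_real \<alpha> * PP y p + of_real \<beta> * ee A B p)))"
    for \<alpha> \<beta> :: real
  proof -
    let ?a = "(\<lambda>p. of_real \<alpha> * PP y p + of_real \<beta> * ee A B p)"
    have e: "clt_mult X (clt_star ?a) ?a = (\<lambda>p. of_real (\<alpha>*\<alpha>) * (2 * PP y p) + of_real (\<alpha>*\<beta>) * (2 * ee A B p) + of_real (\<beta>*\<beta>) * ee {} {} p)"
      unfolding expand[OF star_PP] PP_PP[OF fin y] sh hh Ph by simp
    have "in_SS X (clt_mult X (clt_star ?a) ?a)"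
      unfolding e unfolding in_SS_def PP_def ee_def using AB by auto
    then show ?thesis using st unfolding is_state_SS_def by blast
  qed
  have "lin_eval X s (clt_mult X (PP y) (ee A B)) + lin_eval X s (clt_mult X (clt_star (ee A B)) (PP y)) = 0"
    by (rule cs_lemma[OF pos star_PP]) (simp add: PP_PP[OF fin y] lin_eval_scale lin_eval_PP[OF fin y] s00 syy)
  then have "lin_eval X s (\<lambda>p. 2 * ee A B p) = 0"
    unfolding sh lin_eval_add[symmetric] Ph .
  then show ?thesis unfolding lin_eval_scale using lin_eval_ee[OF fin AB(1,2)] by simp
qed

lemma CC_rel:
  assumes fin: "finite X" and st: "is_state_CC X t" and y: "y \<in> X" and tyy: "t ({y}, {y}) = 1"
    and AB: "A \<subseteq> X" "B \<subseteq> X"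
  shows "t (A, B) = (cl_sgn {y} A * cl_sgn {y} B) * t (sdiff {y} A, sdiff {y} B)
       \<and> t (A, B) = (cl_sgn A {y} * cl_sgn B {y}) * t (sdiff {y} A, sdiff {y} B)"
proof -
  have t00: "t ({}, {}) = 1" using st by (simp add: is_state_CC_def)
  have pos: "cpos (lin_eval X t (clt_mult X (clt_star a) a))" for a
    using st by (simp add: is_state_CC_def)
  have PPv: "lin_eval X t (clt_mult X (PP y) (PP y)) = 0"
    by (simp add: PP_PP[OF fin y] lin_eval_scale lin_eval_PP[OF fin y] t00 tyy)
  have sub: "sdiff {y} A \<subseteq> X" "sdiff {y} B \<subseteq> X" using y AB sdiff_sub[of "{y}" X] by auto
  define \<kappa> where "\<kappa> = cl_sgn A A * cl_sgn B B"
  define s1 where "s1 = cl_sgn {y} A * cl_sgn {y} B"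
  define s2 where "s2 = cl_sgn A {y} * cl_sgn B {y}"
  define t' where "t' = t (sdiff {y} A, sdiff {y} B)"
  have k: "\<kappa> * \<kappa> = 1" unfolding \<kappa>_def by (simp add: algebra_simps)
  have L1: "lin_eval X t (clt_mult X (PP y) (ee A B)) = t (A, B) - s1 * t'"
    unfolding PP_h[OF fin y AB] lin_eval_diff lin_eval_scale s1_def t'_def
    using lin_eval_ee[OF fin AB] lin_eval_ee[OF fin sub] by simp
  have L2: "lin_eval X t (clt_mult X (ee A B) (PP y)) = t (A, B) - s2 * t'"
    unfolding h_PP[OF fin y AB] lin_eval_diff lin_eval_scale s2_def t'_def
    using lin_eval_ee[OF fin AB] lin_eval_ee[OF fin sub] by simp
  have E1: "lin_eval X t (clt_mult X (PP y) (ee A B)) + lin_eval X t (clt_mult X (clt_star (ee A B)) (PP y)) = 0"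
    by (rule cs_lemma[OF pos star_PP PPv])
  have E2: "lin_eval X t (clt_mult X (PP y) (\<lambda>p. \<i> * ee A B p)) + lin_eval X t (clt_mult X (clt_star (\<lambda>p. \<i> * ee A B p)) (PP y)) = 0"
    by (rule cs_lemma[OF pos star_PP PPv])
  have E1': "(t (A, B) - s1 * t') + \<kappa> * (t (A, B) - s2 * t') = 0"
    using E1 unfolding star_ee mult_scale_left lin_eval_scale L1 L2 \<kappa>_def .
  have E2': "\<i> * (t (A, B) - s1 * t') - \<i> * \<kappa> * (t (A, B) - s2 * t') = 0"
    using E2 unfolding star_scale star_ee mult_scale_left mult_scale_right lin_eval_scale L1 L2 \<kappa>_def
    by (simp add: algebra_simps)
  have x: "t (A, B) - s1 * t' = 0" and yy: "\<kappa> * (t (A, B) - s2 * t') = 0"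
    using E1' E2' by (simp_all add: algebra_simps complex_eq_iff) 
  have "t (A, B) - s2 * t' = 0" using yy k by (metis mult_eq_0_iff one_neq_zero mult_zero_left)
  then show ?thesis using x unfolding s1_def s2_def t'_def by simp
qed




lemma sum_sdiff_reindex:
  assumes "finite X" "A \<subseteq> X"
  shows "(\<Sum>U\<in>Pow X. f (sdiff A U)) = (\<Sum>U\<in>Pow X. f U)"
  by (rule sum.reindex_bij_witness[of _ "sdiff A" "sdiff A"]) (use assms in \<open>auto simp: sdiff_def\<close>)

lemma sign_poly:
  fixes p q r u v w :: complex
  assumes "p*p = 1" "q*q = 1" "u*u = 1" "v*v = 1"
  shows "p * (p*q*r*u) * v * (q*v*u*w) = r * w"
  using assms by algebra

lemma sign_ident:
  assumes "finite S1" "finite D" "finite U"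
  shows "cl_sgn S1 S1 * cl_sgn (sdiff S1 D) (sdiff S1 D) * cl_sgn S1 U * cl_sgn (sdiff S1 D) (sdiff D U)
     = cl_sgn D S1 * cl_sgn D U"
proof -
  have "cl_sgn (sdiff S1 D) (sdiff S1 D) = cl_sgn S1 S1 * cl_sgn S1 D * cl_sgn D S1 * cl_sgn D D"
    using assms by (simp add: cl_sgn_sdiff_left cl_sgn_sdiff_right sdiff_fin)
  moreover have "cl_sgn (sdiff S1 D) (sdiff D U) = cl_sgn S1 D * cl_sgn S1 U * cl_sgn D D * cl_sgn D U"
    using assms by (simp add: cl_sgn_sdiff_left cl_sgn_sdiff_right sdiff_fin)
  ultimately show ?thesis by (simp add: sign_poly)
qed

definition t0 :: "'x set \<Rightarrow> 'x clt" where
  "t0 X = (\<lambda>(S, T). if S = T \<and> S \<subseteq> X then 1 else 0)"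

lemma lin_eval_t0:
  assumes "finite X"
  shows "lin_eval X (t0 X) m = (\<Sum>S\<in>Pow X. m (S, S))"
proof -
  have "lin_eval X (t0 X) m = (\<Sum>S\<in>Pow X. \<Sum>T\<in>Pow X. t0 X (S, T) * m (S, T))"
    unfolding lin_eval_def by (simp add: sum.cartesian_product)
  also have "\<dots> = (\<Sum>S\<in>Pow X. m (S, S))"
  proof (rule sum.cong[OF refl])
    fix S assume S: "S \<in> Pow X"
    have "(\<Sum>T\<in>Pow X. t0 X (S, T) * m (S, T)) = (\<Sum>T\<in>Pow X. if S = T then m (S, T) else 0)"
      using S by (intro sum.cong) (auto simp: t0_def)
    also have "\<dots> = m (S, S)" using S assms by simp
    finally show "(\<Sum>T\<in>Pow X. t0 X (S, T) * m (S, T)) = m (S, S)" .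
  qed
  finally show ?thesis .
qed

lemma t0_pos:
  assumes fin: "finite X"
  shows "cpos (lin_eval X (t0 X) (clt_mult X (clt_star a) a))"
proof -
  define F where "F S S1 T1 = cnj (a (S1, T1)) * cl_sgn S1 S1 * cl_sgn T1 T1 * a (sdiff S1 S, sdiff T1 S)
      * cl_sgn S1 (sdiff S1 S) * cl_sgn T1 (sdiff T1 S)" for S S1 T1
  define h where "h D V = a (V, sdiff V D) * cl_sgn D V" for D V
  have "lin_eval X (t0 X) (clt_mult X (clt_star a) a) = (\<Sum>S\<in>Pow X. \<Sum>S1\<in>Pow X. \<Sum>T1\<in>Pow X. F S S1 T1)"
    unfolding lin_eval_t0[OF fin] clt_mult_def clt_star_def F_def
    by (simp add: sum.cartesian_product split_def)
  also have "\<dots> = (\<Sum>S1\<in>Pow X. \<Sum>T1\<in>Pow X. \<Sum>S\<in>Pow X. F S S1 T1)"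
    by (subst sum.swap, rule sum.cong[OF refl], rule sum.swap)
  also have "\<dots> = (\<Sum>S1\<in>Pow X. \<Sum>D\<in>Pow X. \<Sum>U\<in>Pow X. F (sdiff S1 U) S1 (sdiff S1 D))"
  proof (rule sum.cong[OF refl])
    fix S1 assume S1: "S1 \<in> Pow X"
    have "(\<Sum>T1\<in>Pow X. \<Sum>S\<in>Pow X. F S S1 T1) = (\<Sum>D\<in>Pow X. \<Sum>S\<in>Pow X. F S S1 (sdiff S1 D))"
      using S1 fin by (simp add: sum_sdiff_reindex[of X S1 "\<lambda>T1. \<Sum>S\<in>Pow X. F S S1 T1"])
    also have "\<dots> = (\<Sum>D\<in>Pow X. \<Sum>U\<in>Pow X. F (sdiff S1 U) S1 (sdiff S1 D))"
      using S1 fin by (simp add: sum_sdiff_reindex[of X S1 "\<lambda>S. F S S1 _"])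
    finally show "(\<Sum>T1\<in>Pow X. \<Sum>S\<in>Pow X. F S S1 T1) = (\<Sum>D\<in>Pow X. \<Sum>U\<in>Pow X. F (sdiff S1 U) S1 (sdiff S1 D))" .
  qed
  also have "\<dots> = (\<Sum>S1\<in>Pow X. \<Sum>D\<in>Pow X. \<Sum>U\<in>Pow X. cnj (h D S1) * h D U)"
  proof (intro sum.cong refl)
    fix S1 D U assume S1: "S1 \<in> Pow X" and D: "D \<in> Pow X" and U: "U \<in> Pow X"
    have f: "finite S1" "finite D" "finite U" using S1 D U fin finite_subset by auto
    have e1: "sdiff (sdiff S1 D) (sdiff S1 U) = sdiff D U" by (auto simp: sdiff_def)
    have e2: "sdiff (sdiff S1 D) S1 = D" by (auto simp: sdiff_def)
    have e3: "sdiff D U = sdiff U D" by (rule sdiff_commute)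
    have "F (sdiff S1 U) S1 (sdiff S1 D) = cnj (a (S1, sdiff S1 D)) * a (U, sdiff D U) *
       (cl_sgn S1 S1 * cl_sgn (sdiff S1 D) (sdiff S1 D) * cl_sgn S1 U * cl_sgn (sdiff S1 D) (sdiff D U))"
      unfolding F_def e1 by (simp add: algebra_simps)
    also have "\<dots> = cnj (h D S1) * h D U"
      unfolding sign_ident[OF f] h_def e3[symmetric] by (simp add: algebra_simps sdiff_commute[of S1 D])
    finally show "F (sdiff S1 U) S1 (sdiff S1 D) = cnj (h D S1) * h D U" .
  qed
  also have "\<dots> = (\<Sum>D\<in>Pow X. cnj (\<Sum>V\<in>Pow X. h D V) * (\<Sum>V\<in>Pow X. h D V))"
  proof -
    have "(\<Sum>S1\<in>Pow X. \<Sum>D\<in>Pow X. \<Sum>U\<in>Pow X. cnj (h D S1) * h D U) = (\<Sum>D\<in>Pow X. \<Sum>S1\<in>Pow X. \<Sum>U\<in>Pow X. cnj (h D S1) * h D U)"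
      by (rule sum.swap)
    also have "\<dots> = (\<Sum>D\<in>Pow X. cnj (\<Sum>V\<in>Pow X. h D V) * (\<Sum>V\<in>Pow X. h D V))"
      by (simp add: sum_product cnj_sum)
    finally show ?thesis .
  qed
  also have "\<dots> = of_real (\<Sum>D\<in>Pow X. (cmod (\<Sum>V\<in>Pow X. h D V))^2)"
    unfolding of_real_sum complex_norm_square by (simp add: mult.commute)
  finally show ?thesis by (simp add: cpos_def sum_nonneg)
qed




lemma anti_of_odd:
  assumes "finite A" "finite B" "odd (card (A - {y}) + card (B - {y}))"
  shows "cl_sgn {y} A * cl_sgn {y} B = - (cl_sgn A {y} * cl_sgn B {y})"
proof -
  define a where "a = cl_sgn {y} A * cl_sgn {y} B"
  define b where "b = cl_sgn A {y} * cl_sgn B {y}"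
  have "a * b = (cl_sgn {y} A * cl_sgn A {y}) * (cl_sgn {y} B * cl_sgn B {y})"
    unfolding a_def b_def by (simp add: algebra_simps)
  also have "\<dots> = (-1) ^ (card (A - {y}) + card (B - {y}))"
    using assms by (simp add: cl_sgn_swap power_add)
  also have "\<dots> = -1" using assms by simp
  finally have ab: "a * b = -1" .
  have bb: "b * b = 1" unfolding b_def by (simp add: algebra_simps)
  have "a = a * (b * b)" using bb by simp
  also have "\<dots> = (a * b) * b" by (simp add: algebra_simps)
  finally have "a = - b" using ab by simp
  then show ?thesis unfolding a_def b_def .
qed

lemma tens_qe:
  "tens (qe x a) (qe x b) = (\<lambda>p. (1/4) * ee {} {} p + ((if a then -1 else 1)/4) * ee {x} {} p
     + ((if b then -1 else 1)/4) * ee {} {x} p + ((if a then -1 else 1)*(if b then -1 else 1)/4) * ee {x} {x} p)"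
  by (auto simp: fun_eq_iff tens_def qe_def ee_def)

lemma corr_val:
  assumes "finite X" "x \<in> X"
  shows "corr X s a b x x = (1/4) * s ({}, {}) + ((if a then -1 else 1)/4) * s ({x}, {})
     + ((if b then -1 else 1)/4) * s ({}, {x}) + ((if a then -1 else 1)*(if b then -1 else 1)/4) * s ({x}, {x})"
  unfolding corr_def tens_qe lin_eval_add lin_eval_scale using assms
  by (simp add: lin_eval_ee)

lemma aux_lin: fixes a b c d :: complex
  assumes "a + b - c = d" "a - b + c = d" shows "d = a"
proof -
  have "(a + b - c) + (a - b + c) = d + d" using assms by simp
  then have "2 * a = 2 * d" by (simp add: algebra_simps)
  then show ?thesis by simp
qed

lemma sync_one:
  assumes "finite X" "x \<in> X" "\<forall>x \<in> X. \<forall>a b. a \<noteq> b \<longrightarrow> corr X s a b x x = 0"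
  shows "s ({x}, {x}) = s ({}, {})"
proof -
  have h: "\<forall>a b. a \<noteq> b \<longrightarrow> corr X s a b x x = 0" using assms(2,3) by blast
  have "corr X s False True x x = 0" "corr X s True False x x = 0" using h by blast+
  then show ?thesis unfolding corr_val[OF assms(1,2)] by (simp add: aux_lin)
qed

lemma CC_zero:
  assumes fin: "finite X" and ev: "even (card X)" and st: "is_state_CC X t"
    and one: "\<forall>y\<in>X. t ({y}, {y}) = 1" and R: "R \<subseteq> X" "R \<noteq> {}"
  shows "t (R, {}) = 0"
proof -
  have fR: "finite R" using R fin finite_subset by auto
  obtain y where y: "y \<in> X" and od: "odd (card (R - {y}))"
  proof (cases "odd (card R)")
    case True
    then have "R \<noteq> X" using ev by auto
    then obtain y where "y \<in> X" "y \<notin> R" using R by auto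
    then show ?thesis using that True by simp
  next
    case False
    obtain y where yR: "y \<in> R" using R by auto
    have c0: "card R > 0" using fR R by (simp add: card_gt_0_iff)
    have c1: "card (R - {y}) = card R - 1" using yR fR by (simp add: card_Diff_singleton)
    have c2: "odd (card R - 1)" using c0 False by presburger
    have yX: "y \<in> X" using yR R by auto
    have "odd (card (R - {y}))" using c1 c2 by simp
    then show ?thesis by (rule that[OF yX])
  qed
  have rel: "t (R, {}) = (cl_sgn {y} R * cl_sgn {y} {}) * t (sdiff {y} R, sdiff {y} {})
       \<and> t (R, {}) = (cl_sgn R {y} * cl_sgn {} {y}) * t (sdiff {y} R, sdiff {y} {})"
    by (rule CC_rel[OF fin st y]) (use one y R in auto)
  have an: "cl_sgn {y} R * cl_sgn {y} {} = - (cl_sgn R {y} * cl_sgn {} {y})"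
    by (rule anti_of_odd) (use fR od in auto)
  define t' where "t' = t (sdiff {y} R, sdiff {y} {})"
  define b where "b = cl_sgn R {y} * cl_sgn {} {y}"
  have bb: "b * b = 1" unfolding b_def by simp
  have r1: "t (R, {}) = - b * t'" and r2: "t (R, {}) = b * t'"
    using rel an unfolding t'_def b_def by auto
  then have "b * t' = 0" by simp
  then show ?thesis using r2 by simp
qed

lemma CC_unique:
  assumes fin: "finite X" and ev: "even (card X)" and st1: "is_state_CC X t1" and st2: "is_state_CC X t2"
    and one1: "\<forall>y\<in>X. t1 ({y}, {y}) = 1" and one2: "\<forall>y\<in>X. t2 ({y}, {y}) = 1"
  shows "t1 = t2"
proof -
  have main: "\<forall>S. S \<subseteq> X \<longrightarrow> t1 (S, T) = t2 (S, T)" if T: "T \<subseteq> X" for T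
  proof -
    have fT: "finite T" using T fin finite_subset by auto
    show ?thesis using fT T
    proof (induction T rule: finite_subset_induct')
      case empty
      show ?case
      proof (intro allI impI)
        fix S assume S: "S \<subseteq> X"
        show "t1 (S, {}) = t2 (S, {})"
        proof (cases "S = {}")
          case True
          then show ?thesis using st1 st2 by (simp add: is_state_CC_def)
        next
          case False
          then show ?thesis using CC_zero[OF fin ev st1 one1 S] CC_zero[OF fin ev st2 one2 S] by simp
        qed
      qed
    next
      case (insert y F)
      show ?case
      proof (intro allI impI)
        fix S assume S: "S \<subseteq> X"
        have FX: "insert y F \<subseteq> X" using insert T by auto
        have e: "sdiff {y} (insert y F) = F" using insert by (auto simp: sdiff_def)
        have S': "sdiff {y} S \<subseteq> X" using S insert sdiff_sub[of "{y}" X S] by auto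
        have "t1 (S, insert y F) = (cl_sgn {y} S * cl_sgn {y} (insert y F)) * t1 (sdiff {y} S, F)"
          using CC_rel[OF fin st1 _ _ S FX, of y] one1 insert e by auto
        moreover have "t2 (S, insert y F) = (cl_sgn {y} S * cl_sgn {y} (insert y F)) * t2 (sdiff {y} S, F)"
          using CC_rel[OF fin st2 _ _ S FX, of y] one2 insert e by auto
        ultimately show "t1 (S, insert y F) = t2 (S, insert y F)" using insert.IH S' by simp
      qed
    qed
  qed
  show ?thesis
  proof (rule ext, clarify)
    fix S T
    show "t1 (S, T) = t2 (S, T)"
    proof (cases "S \<subseteq> X \<and> T \<subseteq> X")
      case True
      then show ?thesis using main by blast
    next
      case False
      then show ?thesis using st1 st2 by (simp add: is_state_CC_def)
    qed
  qed
qed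




lemma card_le1_cases: "finite S \<Longrightarrow> card S \<le> 1 \<Longrightarrow> S = {} \<or> (\<exists>x. S = {x})"
  by (metis card_0_eq card_1_singletonE le_neq_implies_less less_one)

theorem mainTheorem17:
  fixes X :: "'x::linorder set" and s :: "'x clt"
  assumes "finite X" and "even (card X)"
    and "is_state_SS X s"
    and "\<forall>x \<in> X. \<forall>a b. a \<noteq> b \<longrightarrow> corr X s a b x x = 0"
  shows "\<exists>!t. is_state_CC X t \<and>
           (\<forall>S T. S \<subseteq> X \<longrightarrow> T \<subseteq> X \<longrightarrow> card S \<le> 1 \<longrightarrow> card T \<le> 1 \<longrightarrow> t (S, T) = s (S, T))"
proof -
  note fin = assms(1) and ev = assms(2) and st = assms(3)
  have s00: "s ({}, {}) = 1" using st by (simp add: is_state_SS_def)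
  have syy: "\<forall>y\<in>X. s ({y}, {y}) = 1" using sync_one[OF fin _ assms(4)] s00 by simp
  have other: "\<exists>y\<in>X. y \<noteq> x" if x: "x \<in> X" for x
  proof (rule ccontr)
    assume "\<not> ?thesis"
    then have "X = {x}" using x by blast
    then show False using ev by simp
  qed
  have zero: "s (A, B) = 0" if y: "y \<in> X" and AB: "A \<subseteq> X" "B \<subseteq> X" "card A \<le> 1" "card B \<le> 1"
    and od: "odd (card (A - {y}) + card (B - {y}))" for y A B
  proof (rule SS_zero[OF fin st y _ AB])
    show "s ({y}, {y}) = 1" using syy y by simp
    have "finite A" "finite B" using AB fin finite_subset by auto
    then show "cl_sgn {y} A * cl_sgn {y} B = - (cl_sgn A {y} * cl_sgn B {y})"
      using anti_of_odd od by blast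
  qed
  define P where "P t \<longleftrightarrow> is_state_CC X t \<and>
           (\<forall>S T. S \<subseteq> X \<longrightarrow> T \<subseteq> X \<longrightarrow> card S \<le> 1 \<longrightarrow> card T \<le> 1 \<longrightarrow> t (S, T) = s (S, T))" for t
  have P0: "P (t0 X)"
    unfolding P_def
  proof (intro conjI allI impI)
    show "is_state_CC X (t0 X)"
      unfolding is_state_CC_def using t0_pos[OF fin] by (auto simp: t0_def)
  next
    fix S T assume S: "S \<subseteq> X" and T: "T \<subseteq> X" and cS: "card S \<le> 1" and cT: "card T \<le> 1"
    have fS: "finite S" "finite T" using S T fin finite_subset by auto
    consider "S = {}" | x where "S = {x}" using card_le1_cases[OF fS(1) cS] by blast
    then show "t0 X (S, T) = s (S, T)"
    proof cases
      case 1
      consider "T = {}" | z where "T = {z}" using card_le1_cases[OF fS(2) cT] by blast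
      then show ?thesis
      proof cases
        case 1
        then show ?thesis using \<open>S = {}\<close> s00 by (simp add: t0_def)
      next
        case 2
        then have z: "z \<in> X" using T by auto
        obtain y where y: "y \<in> X" "y \<noteq> z" using other[OF z] by auto
        have "s (S, T) = 0" by (rule zero[OF y(1) S T cS cT]) (use 2 \<open>S = {}\<close> y in auto)
        then show ?thesis using 2 \<open>S = {}\<close> by (simp add: t0_def)
      qed
    next
      case 2
      then have x: "x \<in> X" using S by auto
      consider "T = {}" | z where "T = {z}" using card_le1_cases[OF fS(2) cT] by blast
      then show ?thesis
      proof cases
        case 1
        obtain y where y: "y \<in> X" "y \<noteq> x" using other[OF x] by auto
        have "s (S, T) = 0" by (rule zero[OF y(1) S T cS cT]) (use 1 \<open>S = {x}\<close> y in auto)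
        then show ?thesis using 1 \<open>S = {x}\<close> by (simp add: t0_def)
      next
        case 3: 2
        show ?thesis
        proof (cases "z = x")
          case True
          then show ?thesis using 3 \<open>S = {x}\<close> syy x by (simp add: t0_def)
        next
          case False
          have "s (S, T) = 0" by (rule zero[OF x S T cS cT]) (use 3 \<open>S = {x}\<close> False in auto)
          then show ?thesis using 3 \<open>S = {x}\<close> False by (simp add: t0_def)
        qed
      qed
    qed
  qed
  have uniq: "t = t0 X" if "P t" for t
  proof (rule CC_unique[OF fin ev])
    show "is_state_CC X t" using that by (simp add: P_def)
    show "is_state_CC X (t0 X)" using P0 by (simp add: P_def)
    show "\<forall>y\<in>X. t ({y}, {y}) = 1" using that syy by (simp add: P_def)
    show "\<forall>y\<in>X. t0 X ({y}, {y}) = 1" by (simp add: t0_def)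
  qed
  show ?thesis using P0 uniq unfolding P_def[symmetric] by blast
qed


end
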